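(* For every $\varepsilon>0$, every positive integer $k$ and every positive integer $L$ there is a number $M=M(\varepsilon,k,L)$ such that the following holds: every sufficiently long word $w\in[k]^n$ can be partitioned into at most $M$ subwords (consecutive blocks) such that the total length of those subwords that are not $(\varepsilon,L)$-regular is at most $\varepsilon n$.
   Context: $[k]=\{1,\dots,k\}$. A subword of a word $w$ is a word consisting of consecutive letters of $w$. For a word $w$ of length $n$ and a word $u$ of length $l<n$, the frequency $f_w(u)$ is the probability that a uniformly randomly chosen subword of $w$ of length $l$ (i.e., one of the $n-l+1$ such subwords, chosen uniformly) equals $u$. A word $w\in[k]^n$ is $(\varepsilon,L)$-regular if for every subword $w'$ of $w$ of length at least $\varepsilon n$ we have $|f_w(u)-f_{w'}(u)|<\varepsilon$ for every word $u$ of length at most $L$. *)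

theory Defs
  imports Complex_Main "HOL-Library.Sublist"
begin

text \<open>Words over [k] are lists of naturals with letters in {1..k}.
  freq w u: fraction of the length-|u| windows of w equal to u
  (there are |w|-|u|+1 windows); 0 if |u| > |w|.\<close>

definition freq :: "nat list \<Rightarrow> nat list \<Rightarrow> real" where
  "freq w u = (if length u \<le> length w then
      real (card {i. i < length w - length u + 1 \<and> take (length u) (drop i w) = u})
        / real (length w - length u + 1)
    else 0)"

definition regular :: "nat \<Rightarrow> real \<Rightarrow> nat \<Rightarrow> nat list \<Rightarrow> bool" where
  "regular k \<epsilon> L w \<longleftrightarrow>
     (\<forall>w'. sublist w' w \<and> real (length w') \<ge> \<epsilon> * real (length w) \<longrightarrow>
        (\<forall>u. set u \<subseteq> {1..k} \<and> length u \<le> L \<longrightarrow> \<bar>freq w u - freq w' u\<bar> < \<epsilon>))"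

end

theory Submission
  imports Defs
begin


definition occ :: "nat list \<Rightarrow> nat list \<Rightarrow> nat" where
  "occ v u = card {i. i < length v \<and> take (length u) (drop i v) = u}"

definition dens :: "nat list \<Rightarrow> nat list \<Rightarrow> real" where
  "dens v u = real (occ v u) / real (length v)"

definition en :: "nat list set \<Rightarrow> nat list \<Rightarrow> real" where
  "en U v = (\<Sum>u\<in>U. real (occ v u)^2 / real (length v))"

definition EN :: "nat list set \<Rightarrow> nat list list \<Rightarrow> real" where
  "EN U ws = sum_list (map (en U) ws)"

lemma fin_lt: "finite {i::nat. i < n \<and> P i}"
  by (rule finite_subset[of _ "{..<n}"]) auto

lemma take_len: "take (length u) xs = u \<Longrightarrow> length u \<le> length xs"
  by (metis length_take min.bounded_iff order_refl)

lemma occ_le: "occ v u \<le> length v"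
proof -
  have "{i. i < length v \<and> take (length u) (drop i v) = u} \<subseteq> {..<length v}" by auto
  then show ?thesis unfolding occ_def by (metis card_lessThan card_mono finite_lessThan)
qed

lemma occ_append_ge: "occ a u + occ b u \<le> occ (a@b) u"
proof -
  let ?A = "{i. i < length a \<and> take (length u) (drop i a) = u}"
  let ?B = "{i. i < length b \<and> take (length u) (drop i b) = u}"
  let ?C = "{i. i < length (a@b) \<and> take (length u) (drop i (a@b)) = u}"
  have sub: "?A \<union> (\<lambda>j. j + length a) ` ?B \<subseteq> ?C"
  proof
    fix i assume "i \<in> ?A \<union> (\<lambda>j. j + length a) ` ?B"
    then show "i \<in> ?C"
    proof
      assume i: "i \<in> ?A"
      then have "length u \<le> length (drop i a)" using take_len by blast
      then show ?thesis using i by (auto simp: take_append)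
    next
      assume "i \<in> (\<lambda>j. j + length a) ` ?B"
      then show ?thesis by auto
    qed
  qed
  have disj: "?A \<inter> (\<lambda>j. j + length a) ` ?B = {}" by auto
  have "card (?A \<union> (\<lambda>j. j + length a) ` ?B) = card ?A + card ((\<lambda>j. j + length a) ` ?B)"
    by (rule card_Un_disjoint) (auto intro: fin_lt simp: disj)
  also have "card ((\<lambda>j. j + length a) ` ?B) = card ?B"
    by (rule card_image) (auto simp: inj_on_def)
  finally have "card ?A + card ?B \<le> card ?C"
    using card_mono[OF fin_lt sub] by simp
  then show ?thesis unfolding occ_def .
qed

lemma occ_append_le: "occ (a@b) u \<le> occ a u + occ b u + length u"
proof -
  let ?A = "{i. i < length a \<and> take (length u) (drop i a) = u}"
  let ?B = "{i. i < length b \<and> take (length u) (drop i b) = u}"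
  let ?C = "{i. i < length (a@b) \<and> take (length u) (drop i (a@b)) = u}"
  let ?D = "{length a - length u..<length a}"
  have sub: "?C \<subseteq> ?A \<union> ?D \<union> (\<lambda>j. j + length a) ` ?B"
  proof
    fix i assume i: "i \<in> ?C"
    show "i \<in> ?A \<union> ?D \<union> (\<lambda>j. j + length a) ` ?B"
    proof (cases "i < length a")
      case True
      show ?thesis
      proof (cases "i + length u \<le> length a")
        case True
        then have "take (length u) (drop i (a@b)) = take (length u) (drop i a)"
          by (simp add: take_append)
        then show ?thesis using i \<open>i < length a\<close> by auto
      next
        case False
        then show ?thesis using \<open>i < length a\<close> by auto
      qed
    next
      case False
      then have "i = (i - length a) + length a" "i - length a < length b"
        "take (length u) (drop (i - length a) b) = u" using i by auto
      then show ?thesis by blast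
    qed
  qed
  have "card ?C \<le> card (?A \<union> ?D \<union> (\<lambda>j. j + length a) ` ?B)"
    by (rule card_mono[OF _ sub]) (auto intro: fin_lt)
  also have "\<dots> \<le> card ?A + card ?D + card ((\<lambda>j. j + length a) ` ?B)"
    by (meson add_le_mono card_Un_le le_refl order_trans)
  also have "\<dots> \<le> card ?A + length u + card ?B"
  proof -
    have "card ?D \<le> length u" by simp
    moreover have "card ((\<lambda>j. j + length a) ` ?B) \<le> card ?B" by (rule card_image_le[OF fin_lt])
    ultimately show ?thesis by linarith
  qed
  finally show ?thesis unfolding occ_def by simp
qed

lemma freq_occ:
  assumes "1 \<le> length u" "length u \<le> length v"
  shows "freq v u = real (occ v u) / real (length v - length u + 1)"
proof -
  have "{i. i < length v - length u + 1 \<and> take (length u) (drop i v) = u}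
      = {i. i < length v \<and> take (length u) (drop i v) = u}"
    using assms by (auto dest: take_len)
  then show ?thesis using assms unfolding freq_def occ_def by simp
qed

lemma freq_nil: "freq v [] = 1"
  by (simp add: freq_def)



lemma sq_div_ge:
  fixes c a m :: real
  assumes "0 \<le> c" "c \<le> a"
  shows "c^2 / a \<ge> 2*m*c - m^2*a"
proof (cases "a = 0")
  case True then show ?thesis using assms by simp
next
  case False
  then have a: "a > 0" using assms by simp
  have "0 \<le> (c - m*a)^2 / a" using a by simp
  also have "(c - m*a)^2 / a = c^2/a - 2*m*c + m^2*a" using a
    by (simp add: field_simps power2_eq_square)
  finally show ?thesis by simp
qed

lemma sq_div_eq:
  fixes c a m :: real
  assumes "0 \<le> c" "c \<le> a"
  shows "c^2 / a = 2*m*c - m^2*a + a * (c/a - m)^2"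
proof (cases "a = 0")
  case True then show ?thesis using assms by simp
next
  case False
  then have a: "a > 0" using assms by simp
  then show ?thesis by (simp add: field_simps power2_eq_square)
qed

lemma real_split:
  fixes \<alpha> \<beta> \<gamma> ca cb cd cv l :: real
  assumes "0 \<le> ca" "ca \<le> \<alpha>" "0 \<le> cb" "cb \<le> \<beta>" "0 \<le> cd" "cd \<le> \<gamma>"
    "ca + cb + cd \<le> cv" "cv \<le> ca + cb + cd + 2*l" "cv \<le> \<alpha> + \<beta> + \<gamma>"
  shows "ca^2/\<alpha> + cb^2/\<beta> + cd^2/\<gamma> - cv^2/(\<alpha>+\<beta>+\<gamma>) \<ge> \<beta> * (cb/\<beta> - cv/(\<alpha>+\<beta>+\<gamma>))^2 - 4*l"
proof -
  define n where "n = \<alpha>+\<beta>+\<gamma>"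
  define m where "m = cv / n"
  have cv0: "0 \<le> cv" using assms by linarith
  have m0: "0 \<le> m" "m \<le> 1" using assms cv0 unfolding m_def n_def
    by (auto simp: divide_le_eq_1)
  have cvn: "cv^2/n = 2*m*cv - m^2*n" "m * n = cv"
  proof -
    show "m * n = cv"
    proof (cases "n = 0")
      case True then show ?thesis using assms cv0 unfolding m_def n_def by simp
    next
      case False then show ?thesis unfolding m_def by simp
    qed
    then show "cv^2/n = 2*m*cv - m^2*n"
      by (metis (no_types, lifting) diff_add_cancel m_def mult_2 power2_eq_square
          times_divide_eq_left mult.commute mult.left_commute add_diff_cancel_right')
  qed
  have 1: "ca^2/\<alpha> \<ge> 2*m*ca - m^2*\<alpha>" using sq_div_ge assms by blast
  have 2: "cb^2/\<beta> = 2*m*cb - m^2*\<beta> + \<beta> * (cb/\<beta> - m)^2" using sq_div_eq assms by blast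
  have 3: "cd^2/\<gamma> \<ge> 2*m*cd - m^2*\<gamma>" using sq_div_ge assms by blast
  have 4: "2*m*(ca+cb+cd - cv) \<ge> -4*l"
  proof -
    define x where "x = ca+cb+cd-cv"
    have x0: "x \<le> 0" "x \<ge> -2*l" using assms unfolding x_def by linarith+
    have "1 * x \<le> m * x" using m0(2) x0(1) by (rule mult_right_mono_neg)
    then have "m*x \<ge> x" by simp
    then have "-4*l \<le> 2*(m*x)" using x0 by linarith
    then show ?thesis unfolding x_def by (simp add: mult.assoc)
  qed
  have "ca^2/\<alpha> + cb^2/\<beta> + cd^2/\<gamma> - cv^2/n \<ge>
     2*m*(ca+cb+cd) - m^2*n + \<beta> * (cb/\<beta> - m)^2 - (2*m*cv - m^2*n)"
    using 1 2 3 cvn(1) unfolding n_def by (simp add: algebra_simps)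
  then show ?thesis using 4 unfolding n_def[symmetric] m_def[symmetric]
    by (simp add: algebra_simps)
qed

lemma freq_dens:
  assumes e: "e > 0" and "1 \<le> length u" "length u \<le> L"
    and v: "real (length v) \<ge> real L + 4*real L/e"
  shows "\<bar>freq v u - dens v u\<bar> \<le> e/4"
proof -
  define m where "m = real (length v)"
  define l where "l = real (length u)"
  define c where "c = real (occ v u)"
  have LL: "4*real L/e \<ge> 0" using e by simp
  have lL: "l \<le> real L" using assms unfolding l_def by simp
  have l1: "l \<ge> 1" using assms unfolding l_def by simp
  have ml: "m - real L \<ge> 4*real L/e" using v unfolding m_def by simp
  then have "m \<ge> l" using LL lL by linarith
  then have luv: "length u \<le> length v" unfolding m_def l_def by simp
  have c0: "0 \<le> c" "c \<le> m" unfolding c_def m_def using occ_le by auto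
  have fr: "freq v u = c / (m - l + 1)"
    using freq_occ[OF assms(2) luv] luv unfolding c_def m_def l_def by (simp add: of_nat_diff)
  have de: "dens v u = c / m" unfolding dens_def c_def m_def by simp
  have pos: "m - l + 1 > 0" "m > 0" using \<open>m \<ge> l\<close> l1 by linarith+
  have key: "l - 1 \<le> e/4 * (m - l + 1)"
  proof -
    have "e/4 * (4*real L/e) = real L" using e by simp
    moreover have "e/4 * (m - real L) \<ge> e/4 * (4*real L/e)" by (rule mult_left_mono[OF ml]) (use e in simp)
    moreover have "e/4 * (m - l + 1) \<ge> e/4 * (m - real L)" using lL e by (simp add: mult_left_mono)
    ultimately show ?thesis using lL by linarith
  qed
  have diff: "c / (m - l + 1) - c / m = c * (l - 1) / (m * (m - l + 1))"
    using pos by (simp add: field_simps)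
  have "c * (l - 1) \<le> m * (e/4 * (m - l + 1))"
    using c0 l1 key by (meson mult_mono order_trans diff_ge_0_iff_ge mult_left_mono c0(1)) 
  then have d1: "c * (l - 1) / (m * (m - l + 1)) \<le> e/4"
    using pos by (simp add: divide_le_eq mult.assoc mult.left_commute)
  have d0: "c * (l - 1) / (m * (m - l + 1)) \<ge> 0" using pos c0 l1 by simp
  have "freq v u - dens v u = c * (l - 1) / (m * (m - l + 1))" using fr de diff by simp
  then show ?thesis using d0 d1 by (metis abs_of_nonneg)
qed

lemma occ3:
  "occ a u + occ b u + occ d u \<le> occ (a@b@d) u"
  "occ (a@b@d) u \<le> occ a u + occ b u + occ d u + 2 * length u"
proof -
  show "occ a u + occ b u + occ d u \<le> occ (a@b@d) u"
    using occ_append_ge[of a u "b@d"] occ_append_ge[of b u d] by linarith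
  show "occ (a@b@d) u \<le> occ a u + occ b u + occ d u + 2 * length u"
    using occ_append_le[of a "b@d" u] occ_append_le[of b d u] by linarith
qed

lemma en_split:
  assumes fin: "finite U" and UL: "\<forall>u\<in>U. length u \<le> L" and u0: "u0 \<in> U"
  shows "en U a + en U b + en U d - en U (a@b@d) \<ge>
     real (length b) * (dens b u0 - dens (a@b@d) u0)^2 - 4 * real L * real (card U)"
proof -
  define f where "f u = real (occ a u)^2 / real (length a) + real (occ b u)^2 / real (length b)
     + real (occ d u)^2 / real (length d) - real (occ (a@b@d) u)^2 / real (length (a@b@d))" for u
  have eq: "en U a + en U b + en U d - en U (a@b@d) = (\<Sum>u\<in>U. f u)"
    unfolding en_def f_def by (simp add: sum.distrib sum_subtractf)
  have fu: "f u \<ge> (if u = u0 then real (length b) * (dens b u0 - dens (a@b@d) u0)^2 else 0) - 4 * real L"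
    if u: "u \<in> U" for u
  proof -
    have len: "real (length (a@b@d)) = real (length a) + real (length b) + real (length d)" by simp
    have o1: "real (occ a u) + real (occ b u) + real (occ d u) \<le> real (occ (a@b@d) u)"
      using occ3(1)[of a u b d] by linarith
    have o2: "real (occ (a@b@d) u) \<le> real (occ a u) + real (occ b u) + real (occ d u) + 2 * real (length u)"
      using occ3(2)[of a b d u] by linarith
    have "f u \<ge> real (length b) * (dens b u - dens (a@b@d) u)^2 - 4*real (length u)"
      unfolding f_def dens_def len
      apply (rule real_split)
      using occ_le[of a u] occ_le[of b u] occ_le[of d u] occ_le[of "a@b@d" u] o1 o2 by (auto simp: len)
    moreover have "real (length u) \<le> real L" using UL u by simp
    moreover have "real (length b) * (dens b u - dens (a@b@d) u)^2 \<ge> 0"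
      by simp
    ultimately have A: "f u \<ge> -4*real L" "f u \<ge> real (length b) * (dens b u - dens (a@b@d) u)^2 - 4*real L"
      by linarith+
    show ?thesis
    proof (cases "u = u0")
      case True then show ?thesis using A(2) by simp
    next
      case False then show ?thesis using A(1) by simp
    qed
  qed
  have "(\<Sum>u\<in>U. f u) \<ge> (\<Sum>u\<in>U. (if u = u0 then real (length b) * (dens b u0 - dens (a@b@d) u0)^2 else 0) - 4 * real L)"
    by (rule sum_mono) (use fu in auto)
  also have "(\<Sum>u\<in>U. (if u = u0 then real (length b) * (dens b u0 - dens (a@b@d) u0)^2 else 0) - 4 * real L)
     = real (length b) * (dens b u0 - dens (a@b@d) u0)^2 - 4 * real L * real (card U)"
    using fin u0 by (simp add: sum_subtractf)
  finally show ?thesis using eq by simp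
qed



lemma en_nil: "en U [] = 0" by (simp add: en_def)

lemma concat_filter_ne: "concat (filter (\<lambda>x. x \<noteq> []) xs) = concat xs"
  by (induct xs) auto

lemma EN_filter_ne: "EN U (filter (\<lambda>x. x \<noteq> []) xs) = EN U xs"
  by (induct xs) (auto simp: EN_def en_nil)

lemma EN_append: "EN U (xs @ ys) = EN U xs + EN U ys" by (simp add: EN_def)

lemma en_nonneg: "en U v \<ge> 0" unfolding en_def by (rule sum_nonneg) simp

lemma en_le: assumes "finite U" shows "en U v \<le> real (card U) * real (length v)"
proof -
  have "real (occ v u)^2 / real (length v) \<le> real (length v)" for u
  proof (cases "length v = 0")
    case True then show ?thesis by simp
  next
    case False
    have "real (occ v u)^2 \<le> real (length v)^2" using occ_le[of v u] by (simp add: power_mono)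
    then show ?thesis using False by (simp add: divide_le_eq power2_eq_square)
  qed
  then show ?thesis unfolding en_def by (rule sum_bounded_above)
qed

lemma EN_le: assumes "finite U" shows "EN U ws \<le> real (card U) * real (length (concat ws))"
  using en_le[OF assms] by (induct ws) (auto simp: EN_def algebra_simps add_mono)

lemma filter_sum: "real (\<Sum>v\<leftarrow>filter P ws. length v) = sum_list (map (\<lambda>v. if P v then real (length v) else 0) ws)"
  by (induct ws) auto

lemma piece:
  fixes e :: real and k L :: nat
  assumes e: "e > 0" and Lpos: "L > 0"
  and U_def: "U = {u. set u \<subseteq> {1..k} \<and> u \<noteq> [] \<and> length u \<le> L}"
  and T_def: "T = (real L + 4*real L/e)/e + (real L + 4*real L/e)"
  and B_def: "B = e^3 * T/4 + 4*real L*real (card U)"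
  and v: "v \<noteq> []"
  shows "\<exists>vs. concat vs = v \<and> (\<forall>x\<in>set vs. x \<noteq> []) \<and> length vs \<le> 3 \<and>
      EN U vs - en U v \<ge> e^3/4 * (if \<not> regular k e L v then real (length v) else 0) - B"
proof -
  have fin: "finite U" unfolding U_def
    by (rule finite_subset[OF _ finite_lists_length_le[of "{1..k}" L]]) auto
  define R where "R = real L + 4*real L/e"
  have R0: "R \<ge> 0" unfolding R_def using e by simp
  have T0: "T \<ge> 0" unfolding T_def R_def[symmetric] using R0 e by simp
  have TR: "T \<ge> R" "e * T \<ge> R" unfolding T_def R_def[symmetric] using R0 e
    by (auto simp: algebra_simps)
  have B1: "B \<ge> e^3 * T/4" "B \<ge> 4*real L*real (card U)" unfolding B_def using e T0 by auto
  show ?thesis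
  proof (cases "regular k e L v \<or> real (length v) < T")
    case True
    have "e^3/4 * (if \<not> regular k e L v then real (length v) else 0) \<le> e^3 * T/4"
      using True e T0 by auto
    then show ?thesis using B1
      by (intro exI[of _ "[v]"]) (auto simp: EN_def v)
  next
    case False
    then have nreg: "\<not> regular k e L v" and vT: "real (length v) \<ge> T" by auto
    from nreg obtain w' u where sw: "sublist w' v" and lw: "real (length w') \<ge> e * real (length v)"
      and us: "set u \<subseteq> {1..k}" and ul: "length u \<le> L" and dev: "\<not> \<bar>freq v u - freq w' u\<bar> < e"
      unfolding regular_def by blast
    from sw obtain a d where vad: "v = a @ w' @ d" unfolding sublist_def by blast
    have une: "u \<noteq> []" using dev e by (auto simp: freq_nil)
    then have u1: "1 \<le> length u" by (cases u) auto
    have uU: "u \<in> U" using us une ul unfolding U_def by auto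
    have vR: "real (length v) \<ge> real L + 4*real L/e" using vT TR unfolding R_def by linarith
    have "e * real (length v) \<ge> e * T" using vT e by (simp add: mult_left_mono)
    then have wR: "real (length w') \<ge> real L + 4*real L/e" using lw TR unfolding R_def by linarith
    have f1: "\<bar>freq v u - dens v u\<bar> \<le> e/4" by (rule freq_dens[OF e u1 ul vR])
    have f2: "\<bar>freq w' u - dens w' u\<bar> \<le> e/4" by (rule freq_dens[OF e u1 ul wR])
    have "\<bar>dens w' u - dens v u\<bar> \<ge> e/2" using f1 f2 dev by linarith
    then have sq: "(dens w' u - dens v u)^2 \<ge> (e/2)^2"
      using abs_le_square_iff[of "e/2" "dens w' u - dens v u"] e by simp
    have "real (length w') * (dens w' u - dens v u)^2 \<ge> (e * real (length v)) * (e/2)^2"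
      by (rule mult_mono[OF lw sq]) auto
    then have gain: "real (length w') * (dens w' u - dens v u)^2 \<ge> e^3/4 * real (length v)"
      by (simp add: power2_eq_square power3_eq_cube algebra_simps)
    have spl: "en U a + en U w' + en U d - en U v \<ge>
      real (length w') * (dens w' u - dens v u)^2 - 4 * real L * real (card U)"
    proof -
      have UL: "\<forall>u\<in>U. length u \<le> L" unfolding U_def by auto
      show ?thesis using en_split[OF fin UL uU, where a=a and b=w' and d=d] unfolding vad by simp
    qed
    have "EN U (filter (\<lambda>x. x \<noteq> []) [a, w', d]) = en U a + en U w' + en U d"
      unfolding EN_filter_ne by (simp add: EN_def)
    moreover have "length (filter (\<lambda>x. x \<noteq> []) [a, w', d]) \<le> 3"
      by (rule order_trans[OF length_filter_le]) simp
    ultimately show ?thesis using spl gain B1 nreg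
      by (intro exI[of _ "filter (\<lambda>x. x \<noteq> []) [a, w', d]"])
        (auto simp: concat_filter_ne vad[symmetric] simp del: filter.simps)
  qed
qed



lemma pieces:
  fixes e :: real and k L :: nat
  assumes e: "e > 0" and Lpos: "L > 0"
  and U_def: "U = {u. set u \<subseteq> {1..k} \<and> u \<noteq> [] \<and> length u \<le> L}"
  and T_def: "T = (real L + 4*real L/e)/e + (real L + 4*real L/e)"
  and B_def: "B = e^3 * T/4 + 4*real L*real (card U)"
  shows "(\<forall>v\<in>set ws. v \<noteq> []) \<Longrightarrow> \<exists>ws'. concat ws' = concat ws \<and> (\<forall>x\<in>set ws'. x \<noteq> []) \<and>
     length ws' \<le> 3 * length ws \<and>
     EN U ws' - EN U ws \<ge> e^3/4 * sum_list (map (\<lambda>v. if \<not> regular k e L v then real (length v) else 0) ws)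
        - B * real (length ws)"
proof (induct ws)
  case Nil
  then show ?case by (intro exI[of _ "[]"]) (simp add: EN_def)
next
  case (Cons v ws)
  then obtain rest where r: "concat rest = concat ws" "\<forall>x\<in>set rest. x \<noteq> []" "length rest \<le> 3 * length ws"
    "EN U rest - EN U ws \<ge> e^3/4 * sum_list (map (\<lambda>v. if \<not> regular k e L v then real (length v) else 0) ws)
        - B * real (length ws)" by auto
  obtain vs where p: "concat vs = v" "\<forall>x\<in>set vs. x \<noteq> []" "length vs \<le> 3"
    "EN U vs - en U v \<ge> e^3/4 * (if \<not> regular k e L v then real (length v) else 0) - B"
    using piece[OF e Lpos U_def T_def B_def] Cons.prems by auto
  have "EN U (v # ws) = en U v + EN U ws" by (simp add: EN_def)
  then show ?case using r p
    by (intro exI[of _ "vs @ rest"]) (auto simp: EN_append algebra_simps)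
qed



theorem lemma14:
  fixes \<epsilon> :: real and k L :: nat
  assumes "\<epsilon> > 0" and "k > 0" and "L > 0"
  shows "\<exists>M::nat. \<exists>N::nat. \<forall>w. length w \<ge> N \<and> set w \<subseteq> {1..k} \<longrightarrow>
           (\<exists>ws. concat ws = w \<and> (\<forall>v\<in>set ws. v \<noteq> []) \<and> length ws \<le> M \<and>
              real (\<Sum>v\<leftarrow>filter (\<lambda>v. \<not> regular k \<epsilon> L v) ws. length v) \<le> \<epsilon> * real (length w))"
proof -
  note e = assms(1) and Lpos = assms(3)
  define U where "U = {u. set u \<subseteq> {1..k} \<and> u \<noteq> [] \<and> length u \<le> L}"
  define T where "T = (real L + 4*real L/\<epsilon>)/\<epsilon> + (real L + 4*real L/\<epsilon>)"
  define B where "B = \<epsilon>^3 * T/4 + 4*real L*real (card U)"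
  define K where "K = real (card U)"
  define J where "J = nat \<lceil>8*K/\<epsilon>^4\<rceil> + 1"
  define N where "N = nat \<lceil>8*B*3^J/\<epsilon>^4\<rceil> + 1"
  have fin: "finite U" unfolding U_def
    by (rule finite_subset[OF _ finite_lists_length_le[of "{1..k}" L]]) auto
  have T0: "T \<ge> 0" unfolding T_def using e by simp
  have B0: "B \<ge> 0" unfolding B_def using T0 e by simp
  have e4: "\<epsilon>^4 > 0" using e by simp
  have J1: "real J * \<epsilon>^4 / 8 > K"
  proof -
    have "real J > 8*K/\<epsilon>^4" unfolding J_def using real_nat_ceiling_ge[of "8*K/\<epsilon>^4"] by simp
    then have "real J * \<epsilon>^4 > 8*K" using e4 by (simp add: divide_less_eq)
    then show ?thesis by simp
  qed
  show ?thesis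
  proof (rule exI[of _ "3^J"], rule exI[of _ N], intro allI impI)
    fix w :: "nat list"
    assume "N \<le> length w \<and> set w \<subseteq> {1..k}"
    then have nN: "N \<le> length w" by simp
    define n where "n = real (length w)"
    have "N \<ge> 1" unfolding N_def by simp
    then have n1: "n \<ge> 1" unfolding n_def using nN by simp
    have nB: "n \<ge> 8*B*3^J/\<epsilon>^4" unfolding n_def using nN real_nat_ceiling_ge[of "8*B*3^J/\<epsilon>^4"]
      unfolding N_def by linarith
    then have "8*B*3^J \<le> n * \<epsilon>^4" using e4 by (simp add: pos_divide_le_eq mult_ac)
    then have nB': "B * 3^J \<le> \<epsilon>^4 * n / 8" by (simp add: mult_ac)
    have wne: "w \<noteq> []" using n1 unfolding n_def by auto
    show "\<exists>ws. concat ws = w \<and> (\<forall>v\<in>set ws. v \<noteq> []) \<and> length ws \<le> 3^J \<and>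
              real (\<Sum>v\<leftarrow>filter (\<lambda>v. \<not> regular k \<epsilon> L v) ws. length v) \<le> \<epsilon> * real (length w)"
    proof (rule ccontr)
      assume nogood: "\<not> ?thesis"
      have claim: "j \<le> J \<Longrightarrow> \<exists>ws. concat ws = w \<and> (\<forall>v\<in>set ws. v \<noteq> []) \<and> length ws \<le> 3^j \<and>
                  EN U ws \<ge> real j * \<epsilon>^4 * n / 8" for j
      proof (induct j)
        case 0
        show ?case using wne en_nonneg[of U w]
          by (intro exI[of _ "[w]"]) (auto simp: EN_def)
      next
        case (Suc j)
        then obtain ws where ws: "concat ws = w" "\<forall>v\<in>set ws. v \<noteq> []" "length ws \<le> 3^j"
          "EN U ws \<ge> real j * \<epsilon>^4 * n / 8" by auto
        have "3^j \<le> (3::nat)^J" using Suc.prems by (simp add: power_increasing)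
        then have lenJn: "length ws \<le> 3^J" using ws(3) by linarith
        then have "real (length ws) \<le> real (3^J)" by (simp only: of_nat_le_iff)
        then have lenJ: "real (length ws) \<le> 3^J" by simp
        have "\<not> real (\<Sum>v\<leftarrow>filter (\<lambda>v. \<not> regular k \<epsilon> L v) ws. length v) \<le> \<epsilon> * real (length w)"
          using nogood ws(1,2) lenJn by blast
        then have bad: "real (\<Sum>v\<leftarrow>filter (\<lambda>v. \<not> regular k \<epsilon> L v) ws. length v) > \<epsilon> * n"
          unfolding n_def by linarith
        then have IRR: "sum_list (map (\<lambda>v. if \<not> regular k \<epsilon> L v then real (length v) else 0) ws) > \<epsilon> * n"
          unfolding filter_sum .
        obtain ws' where ws': "concat ws' = concat ws" "\<forall>x\<in>set ws'. x \<noteq> []"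
          "length ws' \<le> 3 * length ws"
          "EN U ws' - EN U ws \<ge> \<epsilon>^3/4 * sum_list (map (\<lambda>v. if \<not> regular k \<epsilon> L v then real (length v) else 0) ws)
            - B * real (length ws)"
          using pieces[OF e Lpos U_def T_def B_def ws(2)] by blast
        have g1: "\<epsilon>^3/4 * sum_list (map (\<lambda>v. if \<not> regular k \<epsilon> L v then real (length v) else 0) ws)
            \<ge> \<epsilon>^3/4 * (\<epsilon> * n)" using IRR e by (intro mult_left_mono) auto
        have g2: "B * real (length ws) \<le> B * 3^J" using lenJ B0 by (intro mult_left_mono) auto
        have g3: "\<epsilon>^3/4 * (\<epsilon> * n) = \<epsilon>^4 * n / 4" by (simp add: power_numeral_reduce)
        have "EN U ws' \<ge> real (Suc j) * \<epsilon>^4 * n / 8"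
        proof -
          have "real (Suc j) * \<epsilon>^4 * n / 8 = real j * \<epsilon>^4 * n / 8 + \<epsilon>^4 * n / 8"
            by (simp add: distrib_right add_divide_distrib)
          then show ?thesis using ws(4) ws'(4) g1 g2 g3 nB' by linarith
        qed
        moreover have "length ws' \<le> 3^Suc j" using ws'(3) ws(3) by simp
        ultimately show ?case using ws' ws by auto
      qed
      obtain ws where ws: "concat ws = w" "EN U ws \<ge> real J * \<epsilon>^4 * n / 8"
        using claim[of J] by auto
      have "EN U ws \<le> K * n" using EN_le[OF fin, of ws] ws(1) unfolding K_def n_def by simp
      moreover have "real J * \<epsilon>^4 * n / 8 > K * n"
      proof -
        have "K * n < (real J * \<epsilon>^4 / 8) * n" using J1 n1 by (intro mult_strict_right_mono) auto
        then show ?thesis by simp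
      qed
      ultimately show False using ws(2) by linarith
    qed
  qed
qed

end
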